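(* Let $\varrho_0,\varrho\in\mathbb{R}$ with $0<\varrho_0<\varrho$, let $q\in\mathbb{N}$ with $q\ge2$, let $\boldsymbol{a}\subset\mathbb{N}_0\times\mathbb{N}$ be finite and, for $j\in\mathbb{N}$, let $\varnothing\ne\boldsymbol{a}_j\subseteq\boldsymbol{a}$, and suppose $m/n\le\varrho_0$ for all $(m,n)\in\boldsymbol{a}$. Then the relation $\prec$ on $\boldsymbol{a}$ given by $(m,n)\prec(m',n')$ iff either $m-n\varrho>m'-n'\varrho$, or $m-n\varrho=m'-n'\varrho$ and $n<n'$, is a strict linear order on $\boldsymbol{a}$. Let $(m_0,n_0)\in\boldsymbol{a}$ be $\prec$-minimal subject to the set $\{j\in\mathbb{N}\mid(m_0,n_0)\in\boldsymbol{a}_j\}$ being infinite, let $(k_j)_{j\in\mathbb{N}}$ be natural numbers with $|k_j/j-\varrho|\le1/j$ for all $j$, and set $f(j)=n_0k_j-m_0j$ if $j\ge(\varrho-\varrho_0)^{-1}$ and $f(j)=0$ otherwise. Then the Dirichlet series corresponding to the infinite product $\prod_{j\in\mathbb{N}}\bigl(1+\xi_{\boldsymbol{a}_j,q^j}\bigr)^{q^{f(j)}}$ has abscissa of convergence $\varrho$.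
   Context: For a finite set $\boldsymbol{b}\subset\mathbb{N}_0\times\mathbb{N}$ and $Q\in\mathbb{N}_{\ge2}$, $\xi_{\boldsymbol{b},Q}(s)=\sum_{(m,n)\in\boldsymbol{b}}Q^{m-ns}$, a Dirichlet polynomial. The abscissa of convergence of a Dirichlet series $\sum_n c_nn^{-s}$ with non-negative coefficients is the infimum of real $\sigma$ for which it converges at $s=\sigma$. *)

theory Defs
  imports "HOL-Analysis.Analysis"
begin

text \<open>Formal Dirichlet series with real coefficients are represented by their
coefficient functions nat \<Rightarrow> real (index 0 is irrelevant and always 0 here).\<close>

definition dconv :: "(nat \<Rightarrow> real) \<Rightarrow> (nat \<Rightarrow> real) \<Rightarrow> nat \<Rightarrow> real" where
  "dconv a b n = (\<Sum>d\<in>{d. d dvd n}. a d * b (n div d))"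

definition dunit :: "nat \<Rightarrow> real" where
  "dunit n = (if n = 1 then 1 else 0)"

fun dpow :: "(nat \<Rightarrow> real) \<Rightarrow> nat \<Rightarrow> nat \<Rightarrow> real" where
  "dpow a 0 = dunit"
| "dpow a (Suc k) = dconv a (dpow a k)"

text \<open>Coefficients of the Dirichlet polynomial xi_{b,Q}(s) = sum over (m,n) in b of
  Q^m (Q^n)^(-s).\<close>
definition xi_coeff :: "(nat \<times> nat) set \<Rightarrow> nat \<Rightarrow> nat \<Rightarrow> real" where
  "xi_coeff b Q N = (\<Sum>p\<in>{p\<in>b. Q ^ snd p = N}. real Q ^ fst p)"

definition one_plus_xi :: "(nat \<times> nat) set \<Rightarrow> nat \<Rightarrow> nat \<Rightarrow> real" where
  "one_plus_xi b Q N = dunit N + xi_coeff b Q N"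

fun dprod_upto :: "(nat \<Rightarrow> (nat \<times> nat) set) \<Rightarrow> nat \<Rightarrow> (nat \<Rightarrow> nat) \<Rightarrow> nat \<Rightarrow> nat \<Rightarrow> real" where
  "dprod_upto A q e 0 = dunit"
| "dprod_upto A q e (Suc J) = dconv (dprod_upto A q e J) (dpow (one_plus_xi (A (Suc J)) (q ^ Suc J)) (e (Suc J)))"

definition dprod_inf :: "(nat \<Rightarrow> (nat \<times> nat) set) \<Rightarrow> nat \<Rightarrow> (nat \<Rightarrow> nat) \<Rightarrow> nat \<Rightarrow> real" where
  "dprod_inf A q e N = lim (\<lambda>J. dprod_upto A q e J N)"

definition abscissa_conv :: "(nat \<Rightarrow> real) \<Rightarrow> ereal" where
  "abscissa_conv c = Inf (ereal ` {\<sigma>::real. summable (\<lambda>n. c n * real n powr (- \<sigma>))})"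

definition prec_rel :: "real \<Rightarrow> nat \<times> nat \<Rightarrow> nat \<times> nat \<Rightarrow> bool" where
  "prec_rel \<rho> x y \<longleftrightarrow>
     (real (fst x) - real (snd x) * \<rho> > real (fst y) - real (snd y) * \<rho>) \<or>
     (real (fst x) - real (snd x) * \<rho> = real (fst y) - real (snd y) * \<rho> \<and> snd x < snd y)"

end

theory Submission imports Defs begin

lemma divisors_finite: "0 < n \<Longrightarrow> finite {d::nat. d dvd n}"
  by (simp add: finite_divisors_nat)

lemma dconv_nonneg:
  assumes "\<And>n. a n \<ge> 0" "\<And>n. b n \<ge> 0"
  shows "dconv a b n \<ge> 0"
  unfolding dconv_def by (intro sum_nonneg mult_nonneg_nonneg assms)

lemma dpow_nonneg: "(\<And>n. a n \<ge> 0) \<Longrightarrow> dpow a E n \<ge> 0"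
  by (induction E arbitrary: n) (auto simp: dunit_def intro!: dconv_nonneg)

lemma dconv_ge_term:
  assumes "\<And>n. a n \<ge> 0" "\<And>n. b n \<ge> 0" "0 < n" "d dvd n"
  shows "dconv a b n \<ge> a d * b (n div d)"
  unfolding dconv_def
  by (rule member_le_sum) (use assms divisors_finite in auto)

lemma dconv_1: "dconv a b (Suc 0) = a (Suc 0) * b (Suc 0)"
  unfolding dconv_def by simp

lemma dconv_unit_small:
  assumes "\<And>n. 0 < n \<Longrightarrow> n < Q \<Longrightarrow> a n = dunit n"
      and "\<And>n. 0 < n \<Longrightarrow> n < Q \<Longrightarrow> b n = dunit n"
      and "0 < n" "n < Q"
  shows "dconv a b n = dunit n"
proof -
  have "dconv a b n = (\<Sum>d\<in>{d. d dvd n}. dunit d * dunit (n div d))"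
    unfolding dconv_def
  proof (rule sum.cong)
    fix d assume "d \<in> {d. d dvd n}"
    then have d: "d dvd n" by simp
    then have "0 < d" "d \<le> n" using assms(3) by (auto intro: dvd_imp_le Nat.gr0I)
    moreover have "0 < n div d" "n div d \<le> n" using d assms(3)
      by (auto simp: dvd_div_eq_0_iff)
    ultimately show "a d * b (n div d) = dunit d * dunit (n div d)"
      using assms(1,2)[of d] assms(1,2)[of "n div d"] assms(4) by (simp add: order_le_less_trans[OF div_le_dividend])
  qed simp
  also have "\<dots> = (\<Sum>d\<in>{d. d dvd n}. if d = 1 then dunit n else 0)"
    by (rule sum.cong) (auto simp: dunit_def)
  also have "\<dots> = dunit n"
    using divisors_finite[OF assms(3)] by (simp add: sum.delta)
  finally show ?thesis .
qed

lemma dpow_unit_small: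
  assumes "\<And>n. 0 < n \<Longrightarrow> n < Q \<Longrightarrow> a n = dunit n" "0 < n" "n < Q"
  shows "dpow a E n = dunit n"
  using assms(2,3)
proof (induction E arbitrary: n)
  case (Suc E) then show ?case using dconv_unit_small[OF assms(1)] by simp
qed simp

lemma dpow_1: "a 1 = 1 \<Longrightarrow> dpow a E 1 = 1"
  by (induction E) (auto simp: dunit_def dconv_1)

lemma dpow_ge_lin:
  assumes "\<And>n. a n \<ge> 0" "a 1 = 1" "1 < N"
  shows "dpow a E N \<ge> real E * a N"
proof (induction E)
  case 0 then show ?case by (simp add: dunit_def)
next
  case (Suc E)
  have fin: "finite {d. d dvd N}" using assms(3) divisors_finite by simp
  have "a 1 * dpow a E (N div 1) + a N * dpow a E (N div N)
        = (\<Sum>d\<in>{1,N}. a d * dpow a E (N div d))" using assms(3) by simp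
  also have "\<dots> \<le> dconv a (dpow a E) N" unfolding dconv_def
    by (rule sum_mono2[OF fin]) (auto intro!: mult_nonneg_nonneg dpow_nonneg assms)
  finally have "a 1 * dpow a E N + a N * dpow a E 1 \<le> dpow a (Suc E) N" using assms(3) by simp
  then show ?case using Suc assms dpow_1[of a E] by (simp add: algebra_simps)
qed

lemma dconv_partial_bound:
  assumes a0: "\<And>n. a n \<ge> 0" and b0: "\<And>n. b n \<ge> 0"
  shows "(\<Sum>N\<in>{1..M}. dconv a b N * real N powr (-\<sigma>))
     \<le> (\<Sum>d\<in>{1..M}. a d * real d powr (-\<sigma>)) * (\<Sum>e\<in>{1..M}. b e * real e powr (-\<sigma>))"
proof -
  define g where "g = (\<lambda>(d::nat,e::nat). a d * real d powr (-\<sigma>) * (b e * real e powr (-\<sigma>)))"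
  define S where "S = Sigma {1..M} (\<lambda>N. {d. d dvd N})"
  define T where "T = {(d,e). d \<in> {1..M} \<and> e \<in> {1..M} \<and> d * e \<le> M}"
  have "(\<Sum>N\<in>{1..M}. dconv a b N * real N powr (-\<sigma>))
      = (\<Sum>N\<in>{1..M}. \<Sum>d\<in>{d. d dvd N}. g (d, N div d))"
  proof (rule sum.cong)
    fix N assume N: "N \<in> {1..M}"
    show "dconv a b N * real N powr (-\<sigma>) = (\<Sum>d\<in>{d. d dvd N}. g (d, N div d))"
      unfolding dconv_def sum_distrib_right
    proof (rule sum.cong)
      fix d assume "d \<in> {d. d dvd N}"
      then have "real N = real d * real (N div d)" by (simp flip: of_nat_mult)
      then have "real N powr (-\<sigma>) = real d powr (-\<sigma>) * real (N div d) powr (-\<sigma>)"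
        by (simp add: powr_mult)
      then show "a d * b (N div d) * real N powr (-\<sigma>) = g (d, N div d)"
        by (simp add: g_def algebra_simps)
    qed simp
  qed simp
  also have "\<dots> = (\<Sum>p\<in>S. g (snd p, fst p div snd p))"
    unfolding S_def by (subst sum.Sigma) (auto simp: finite_divisors_nat case_prod_beta)
  also have "\<dots> = (\<Sum>p\<in>T. g p)"
  proof (rule sum.reindex_bij_witness[where i = "\<lambda>(d,e). (d*e, d)" and j = "\<lambda>(N,d). (d, N div d)"])
    fix p assume "p \<in> S"
    then obtain N d where p: "p = (N,d)" "N \<in> {1..M}" "d dvd N" unfolding S_def by auto
    then show "(case case p of (N, d) \<Rightarrow> (d, N div d) of (d, e) \<Rightarrow> (d * e, d)) = p" by auto
    have "0 < d" "d \<le> N" using p by (auto intro: dvd_imp_le Nat.gr0I)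
    moreover have "0 < N div d" "N div d \<le> N" using p by (auto simp: dvd_div_eq_0_iff)
    ultimately show "(case p of (N, d) \<Rightarrow> (d, N div d)) \<in> T" using p unfolding T_def by (auto intro: le_trans[OF div_le_dividend])
    show "g (case p of (N, d) \<Rightarrow> (d, N div d)) = g (snd p, fst p div snd p)" using p by simp
  next
    fix p assume "p \<in> T"
    then obtain d e where p: "p = (d,e)" "d \<in> {1..M}" "e \<in> {1..M}" "d * e \<le> M" unfolding T_def by auto
    then show "(case case p of (d, e) \<Rightarrow> (d * e, d) of (N, d) \<Rightarrow> (d, N div d)) = p" by auto
    show "(case p of (d, e) \<Rightarrow> (d * e, d)) \<in> S" using p unfolding S_def by auto
  qed
  also have "\<dots> \<le> (\<Sum>p\<in>{1..M}\<times>{1..M}. g p)"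
    by (rule sum_mono2) (auto simp: T_def g_def intro!: mult_nonneg_nonneg a0 b0)
  also have "\<dots> = (\<Sum>d\<in>{1..M}. a d * real d powr (-\<sigma>)) * (\<Sum>e\<in>{1..M}. b e * real e powr (-\<sigma>))"
    unfolding g_def by (simp add: sum_product sum.cartesian_product)
  finally show ?thesis .
qed

lemma dunit_partial: "(\<Sum>N\<in>{1..M}. dunit N * real N powr (-\<sigma>)) \<le> 1"
proof -
  have "(\<Sum>N\<in>{1..M}. dunit N * real N powr (-\<sigma>)) = (\<Sum>N\<in>{1..M}. if N = 1 then 1 else 0)"
    by (rule sum.cong) (auto simp: dunit_def)
  also have "\<dots> \<le> 1" by (simp add: sum.delta)
  finally show ?thesis .
qed

lemma dpow_partial_bound:
  assumes a0: "\<And>n. a n \<ge> 0"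
  shows "(\<Sum>N\<in>{1..M}. dpow a E N * real N powr (-\<sigma>)) \<le> (\<Sum>d\<in>{1..M}. a d * real d powr (-\<sigma>)) ^ E"
proof (induction E)
  case 0 then show ?case using dunit_partial by simp
next
  case (Suc E)
  have s0: "0 \<le> (\<Sum>d\<in>{1..M}. a d * real d powr (-\<sigma>))"
    by (intro sum_nonneg mult_nonneg_nonneg a0) simp
  have "(\<Sum>N\<in>{1..M}. dpow a (Suc E) N * real N powr (-\<sigma>))
     \<le> (\<Sum>d\<in>{1..M}. a d * real d powr (-\<sigma>)) * (\<Sum>e\<in>{1..M}. dpow a E e * real e powr (-\<sigma>))"
    using dconv_partial_bound[OF a0 dpow_nonneg[OF a0]] by simp
  also have "\<dots> \<le> (\<Sum>d\<in>{1..M}. a d * real d powr (-\<sigma>)) * (\<Sum>d\<in>{1..M}. a d * real d powr (-\<sigma>)) ^ E"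
    by (rule mult_left_mono[OF Suc s0])
  finally show ?case by simp
qed

lemma xi_nonneg: "xi_coeff b Q N \<ge> 0"
  unfolding xi_coeff_def by (intro sum_nonneg) auto

lemma opx_nonneg: "one_plus_xi b Q N \<ge> 0"
  unfolding one_plus_xi_def using xi_nonneg[of b Q N] by (simp add: dunit_def)

lemma xi_small:
  assumes "\<forall>p\<in>b. snd p \<ge> 1" "Q \<ge> 2" "n < Q"
  shows "xi_coeff b Q n = 0"
proof -
  have "Q ^ snd p \<noteq> n" if "p \<in> b" for p
  proof -
    have "Q ^ 1 \<le> Q ^ snd p" using assms(1,2) that by (intro power_increasing) auto
    then show ?thesis using assms(2,3) by simp
  qed
  then have "{p\<in>b. Q ^ snd p = n} = {}" by auto
  then show ?thesis unfolding xi_coeff_def by (simp only: sum.empty)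
qed

lemma opx_small:
  assumes "\<forall>p\<in>b. snd p \<ge> 1" "Q \<ge> 2" "n < Q"
  shows "one_plus_xi b Q n = dunit n"
  using xi_small[OF assms] unfolding one_plus_xi_def by simp

lemma opx_1:
  assumes "\<forall>p\<in>b. snd p \<ge> 1" "Q \<ge> 2"
  shows "one_plus_xi b Q 1 = 1"
  using opx_small[OF assms, of 1] assms by (simp add: dunit_def)

lemma xi_ge:
  assumes "finite b" "p \<in> b" "Q \<ge> 2"
  shows "xi_coeff b Q (Q ^ snd p) \<ge> real Q ^ fst p"
  unfolding xi_coeff_def
  by (rule member_le_sum[where f = "\<lambda>p. real Q ^ fst p", simplified]) (use assms in auto)

lemma opx_partial_bound:
  assumes "finite b" "\<forall>p\<in>b. snd p \<ge> 1" "Q \<ge> 2"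
  shows "(\<Sum>N\<in>{1..M}. one_plus_xi b Q N * real N powr (-\<sigma>))
    \<le> 1 + (\<Sum>p\<in>b. real Q ^ fst p * real (Q ^ snd p) powr (-\<sigma>))"
proof -
  define h where "h = (\<lambda>p::nat\<times>nat. real Q ^ fst p * real (Q ^ snd p) powr (-\<sigma>))"
  have "(\<Sum>N\<in>{1..M}. one_plus_xi b Q N * real N powr (-\<sigma>))
     = (\<Sum>N\<in>{1..M}. dunit N * real N powr (-\<sigma>)) + (\<Sum>N\<in>{1..M}. xi_coeff b Q N * real N powr (-\<sigma>))"
    unfolding one_plus_xi_def by (simp add: algebra_simps sum.distrib)
  also have "(\<Sum>N\<in>{1..M}. xi_coeff b Q N * real N powr (-\<sigma>)) = (\<Sum>N\<in>{1..M}. sum h {p\<in>{p\<in>b. Q ^ snd p \<in> {1..M}}. Q ^ snd p = N})"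
    unfolding xi_coeff_def sum_distrib_right h_def
    by (rule sum.cong[OF refl], rule sum.cong) auto
  also have "\<dots> = sum h {p\<in>b. Q ^ snd p \<in> {1..M}}"
    by (rule sum.group) (use assms(1) in auto)
  also have "\<dots> \<le> sum h b"
    by (rule sum_mono2) (auto simp: h_def assms(1))
  finally show ?thesis using dunit_partial[where M=M and \<sigma>=\<sigma>] unfolding h_def by linarith
qed

context
  fixes A :: "nat \<Rightarrow> (nat \<times> nat) set" and q :: nat and e :: "nat \<Rightarrow> nat"
  assumes q2: "q \<ge> 2" and HA: "\<forall>j\<ge>1. finite (A j) \<and> (\<forall>p\<in>A j. snd p \<ge> 1)"
begin

abbreviation "FF j \<equiv> dpow (one_plus_xi (A j) (q ^ j)) (e j)"
abbreviation "PP J \<equiv> dprod_upto A q e J"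

lemma qj2: "j \<ge> 1 \<Longrightarrow> q ^ j \<ge> 2"
proof -
  assume "j \<ge> 1"
  then have "q ^ 1 \<le> q ^ j" using q2 by (intro power_increasing) auto
  then show ?thesis using q2 by simp
qed

lemma FF_nonneg: "dpow (one_plus_xi b Q) E n \<ge> 0"
  by (rule dpow_nonneg) (rule opx_nonneg)

lemma PP_nonneg: "PP J n \<ge> 0"
  by (induction J arbitrary: n) (auto simp: dunit_def intro!: dconv_nonneg FF_nonneg)

lemma FF_small: "j \<ge> 1 \<Longrightarrow> 0 < n \<Longrightarrow> n < q ^ j \<Longrightarrow> FF j n = dunit n"
  by (rule dpow_unit_small[where Q = "q^j"]) (use opx_small HA qj2 in auto)

lemma FF_1: "j \<ge> 1 \<Longrightarrow> FF j 1 = 1"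
  using FF_small[of j 1] qj2[of j] by (simp add: dunit_def)

lemma PP_1: "PP J 1 = 1"
proof (induction J)
  case 0 then show ?case by (simp add: dunit_def)
next
  case (Suc J) then show ?case using FF_1[of "Suc J"] by (simp add: dconv_1)
qed

lemma dconv_unit_right:
  assumes "\<And>n. 0 < n \<Longrightarrow> n < Q \<Longrightarrow> b n = dunit n" "0 < N" "N < Q"
  shows "dconv a b N = a N"
proof -
  have "dconv a b N = (\<Sum>d\<in>{d. d dvd N}. if d = N then a N else 0)"
    unfolding dconv_def
  proof (rule sum.cong)
    fix d assume "d \<in> {d. d dvd N}"
    then have d: "d dvd N" by simp
    have "0 < N div d" "N div d \<le> N" using d assms(2) by (auto simp: dvd_div_eq_0_iff)
    then have "b (N div d) = dunit (N div d)" using assms(1)[of "N div d"] assms(3) by linarith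
    moreover have "N div d = 1 \<longleftrightarrow> d = N" using d assms(2)
      by (metis div_self dvd_mult_div_cancel nat_mult_1_right less_not_refl2)
    ultimately show "a d * b (N div d) = (if d = N then a N else 0)" by (auto simp: dunit_def)
  qed simp
  also have "\<dots> = a N" using finite_divisors_nat[of N] assms(2) by (simp add: sum.delta')
  finally show ?thesis .
qed

lemma PP_step_stable: "0 < N \<Longrightarrow> N < q ^ Suc J \<Longrightarrow> PP (Suc J) N = PP J N"
  using dconv_unit_right[of "q ^ Suc J" "FF (Suc J)" N "PP J"] FF_small[of "Suc J"] by simp

lemma PP_stable: assumes "0 < N" "N \<le> J" shows "PP J N = PP N N"
  using assms(2) proof (induction J rule: dec_induct)
  case (step J)
  have "Suc J < 2 ^ Suc J" by (rule less_exp)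
  also have "\<dots> \<le> q ^ Suc J" using q2 by (intro power_mono) auto
  finally show ?case using step assms(1) PP_step_stable[of N J] by simp
qed simp

lemma PP_Suc: "PP (Suc J) N = dconv (PP J) (FF (Suc J)) N"
  by (simp only: dprod_upto.simps)

lemma PP_mono: assumes "0 < N" shows "PP J N \<le> PP (Suc J) N"
proof -
  have "PP J N * FF (Suc J) (N div N) \<le> dconv (PP J) (FF (Suc J)) N"
    by (rule dconv_ge_term) (use assms PP_nonneg FF_nonneg in auto)
  moreover have "FF (Suc J) (N div N) = 1"
  proof -
    have d: "N div N = 1" using assms by simp
    have "FF (Suc J) 1 = 1" by (rule FF_1) simp
    then show ?thesis by (simp only: d)
  qed
  ultimately show ?thesis by (simp only: PP_Suc mult_1_right)
qed

lemma PP_mono_le: assumes "0 < N" "j \<le> J" shows "PP j N \<le> PP J N"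
  using assms(2) proof (induction J rule: dec_induct)
  case (step J) then show ?case using PP_mono[OF assms(1), of J] by linarith
qed simp

lemma PP_ge_FF: assumes "0 < N" "j \<ge> 1" shows "PP j N \<ge> FF j N"
proof -
  obtain i where j: "j = Suc i" using assms(2) by (cases j) auto
  have "PP i 1 * FF (Suc i) (N div 1) \<le> dconv (PP i) (FF (Suc i)) N"
    by (rule dconv_ge_term) (use assms PP_nonneg FF_nonneg in auto)
  then show ?thesis using PP_1[of i] j by (simp only: PP_Suc div_by_1 mult_1_left)
qed

lemma dprod_inf_eq: assumes "0 < N" shows "dprod_inf A q e N = PP N N"
proof -
  have "(\<lambda>J. PP J N) \<longlonglongrightarrow> PP N N"
    by (rule tendsto_eventually, rule eventually_sequentiallyI[of N], rule PP_stable[OF assms])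
  then show ?thesis unfolding dprod_inf_def by (rule limI)
qed

lemma PP_partial_bound:
  "(\<Sum>N\<in>{1..M}. PP J N * real N powr (-\<sigma>))
    \<le> (\<Prod>j\<in>{1..J}. (1 + (\<Sum>p\<in>A j. real (q ^ j) ^ fst p * real ((q ^ j) ^ snd p) powr (-\<sigma>))) ^ e j)"
proof (induction J)
  case 0 then show ?case using dunit_partial[where M=M and \<sigma>=\<sigma>] by simp
next
  case (Suc J)
  define x where "x = (\<Sum>p\<in>A (Suc J). real (q ^ Suc J) ^ fst p * real ((q ^ Suc J) ^ snd p) powr (-\<sigma>))"
  have "(\<Sum>N\<in>{1..M}. PP (Suc J) N * real N powr (-\<sigma>))
     \<le> (\<Sum>d\<in>{1..M}. PP J d * real d powr (-\<sigma>)) * (\<Sum>N\<in>{1..M}. FF (Suc J) N * real N powr (-\<sigma>))"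
    unfolding PP_Suc by (rule dconv_partial_bound) (use PP_nonneg FF_nonneg in auto)
  also have "(\<Sum>N\<in>{1..M}. FF (Suc J) N * real N powr (-\<sigma>))
     \<le> (\<Sum>d\<in>{1..M}. one_plus_xi (A (Suc J)) (q ^ Suc J) d * real d powr (-\<sigma>)) ^ e (Suc J)"
    by (rule dpow_partial_bound) (rule opx_nonneg)
  also have "\<dots> \<le> (1 + x) ^ e (Suc J)"
    unfolding x_def
    by (intro power_mono opx_partial_bound sum_nonneg mult_nonneg_nonneg opx_nonneg)
       (use HA qj2[of "Suc J"] in auto)
  finally have "(\<Sum>N\<in>{1..M}. PP (Suc J) N * real N powr (-\<sigma>))
     \<le> (\<Sum>d\<in>{1..M}. PP J d * real d powr (-\<sigma>)) * (1 + x) ^ e (Suc J)"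
    by (simp add: mult_left_mono sum_nonneg PP_nonneg)
  also have "\<dots> \<le> (\<Prod>j\<in>{1..J}. (1 + (\<Sum>p\<in>A j. real (q ^ j) ^ fst p * real ((q ^ j) ^ snd p) powr (-\<sigma>))) ^ e j) * (1 + x) ^ e (Suc J)"
    by (rule mult_right_mono[OF Suc]) (auto simp: x_def intro!: zero_le_power add_nonneg_nonneg sum_nonneg mult_nonneg_nonneg)
  also have "\<dots> = (\<Prod>j\<in>{1..Suc J}. (1 + (\<Sum>p\<in>A j. real (q ^ j) ^ fst p * real ((q ^ j) ^ snd p) powr (-\<sigma>))) ^ e j)"
    by (simp add: x_def prod.nat_ivl_Suc')
  finally show ?case .
qed
end

lemma prec_order:
  "strict_linear_order_on a {(x, y). x \<in> a \<and> y \<in> a \<and> prec_rel \<rho> x y}"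
  unfolding strict_linear_order_on_def trans_def irrefl_def total_on_def prec_rel_def
proof (intro conjI allI impI ballI)
  fix x y
  assume "x \<in> a" "y \<in> a" "x \<noteq> y"
  then show "(x, y) \<in> {(x, y). x \<in> a \<and> y \<in> a \<and> (real (fst y) - real (snd y) * \<rho> < real (fst x) - real (snd x) * \<rho> \<or>
              real (fst x) - real (snd x) * \<rho> = real (fst y) - real (snd y) * \<rho> \<and> snd x < snd y)} \<or>
          (y, x) \<in> {(x, y). x \<in> a \<and> y \<in> a \<and> (real (fst y) - real (snd y) * \<rho> < real (fst x) - real (snd x) * \<rho> \<or>
              real (fst x) - real (snd x) * \<rho> = real (fst y) - real (snd y) * \<rho> \<and> snd x < snd y)}"
  proof -
    have key: "\<not> (snd x = snd y \<and> real (fst x) - real (snd x) * \<rho> = real (fst y) - real (snd y) * \<rho>)"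
      using \<open>x \<noteq> y\<close> by (cases x, cases y) auto
    show ?thesis using key \<open>x \<in> a\<close> \<open>y \<in> a\<close> by (auto simp: linorder_neq_iff)
  qed
qed auto

lemma Inf_eq_rho:
  assumes "\<And>\<sigma>. \<sigma> > \<rho> \<Longrightarrow> \<sigma> \<in> S" "\<And>\<sigma>. \<sigma> \<in> S \<Longrightarrow> \<sigma> \<ge> \<rho>"
  shows "Inf (ereal ` S) = ereal \<rho>"
proof (rule antisym)
  show "ereal \<rho> \<le> Inf (ereal ` S)" by (rule Inf_greatest) (use assms(2) in auto)
  show "Inf (ereal ` S) \<le> ereal \<rho>"
    unfolding Inf_le_iff
  proof (intro allI impI)
    fix y assume y: "ereal \<rho> < y"
    then obtain z where z: "ereal \<rho> < z" "z < y" using dense by blast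
    then obtain s where s: "z = ereal s" by (cases z) auto
    then have "s \<in> S" using z assms(1) by simp
    then show "\<exists>a\<in>ereal ` S. a < y" using z s by auto
  qed
qed

lemma term_eq:
  fixes q :: nat assumes "q \<ge> 2"
  shows "real (q ^ E) * real (q ^ j) ^ m * real ((q ^ j) ^ n) powr (-\<sigma>)
       = real q powr (real E + real j * real m - real j * real n * \<sigma>)"
proof -
  have q0: "real q > 0" using assms by simp
  have 1: "real (q ^ E) = real q powr real E" using q0 by (simp add: powr_realpow)
  have 2: "real (q ^ j) ^ m = real q powr (real j * real m)"
    using q0 by (simp add: powr_realpow flip: power_mult of_nat_mult)
  have 3: "real ((q ^ j) ^ n) powr (-\<sigma>) = real q powr (- (real j * real n * \<sigma>))"
  proof -
    have "real ((q ^ j) ^ n) = real q powr (real j * real n)"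
      using q0 by (simp add: powr_realpow flip: power_mult of_nat_mult)
    then show ?thesis by (simp add: powr_powr)
  qed
  show ?thesis unfolding 1 2 3 by (simp add: powr_add[symmetric])
qed

theorem lemma5p2:
  fixes \<rho>0 \<rho> :: real and q m0 n0 :: nat
    and a :: "(nat \<times> nat) set" and A :: "nat \<Rightarrow> (nat \<times> nat) set"
    and k :: "nat \<Rightarrow> nat" and f :: "nat \<Rightarrow> int"
  assumes "0 < \<rho>0" and "\<rho>0 < \<rho>" and "q \<ge> 2"
    and "finite a" and "\<forall>p\<in>a. snd p \<ge> 1"
    and "\<forall>j\<ge>1. A j \<noteq> {} \<and> A j \<subseteq> a"
    and "\<forall>p\<in>a. real (fst p) / real (snd p) \<le> \<rho>0"
    and "(m0, n0) \<in> a"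
    and "infinite {j. j \<ge> 1 \<and> (m0, n0) \<in> A j}"
    and "\<forall>p\<in>a. infinite {j. j \<ge> 1 \<and> p \<in> A j} \<longrightarrow> \<not> prec_rel \<rho> p (m0, n0)"
    and "\<forall>j\<ge>1. k j \<ge> 1 \<and> \<bar>real (k j) / real j - \<rho>\<bar> \<le> 1 / real j"
    and "\<forall>j. f j = (if real j \<ge> 1 / (\<rho> - \<rho>0)
                    then int n0 * int (k j) - int m0 * int j else 0)"
  shows "strict_linear_order_on a {(x, y). x \<in> a \<and> y \<in> a \<and> prec_rel \<rho> x y}
         \<and> abscissa_conv (dprod_inf A q (\<lambda>j. q ^ nat (f j))) = ereal \<rho>"
proof -
  have q2: "q \<ge> 2" by (rule assms(3))
  have HA: "\<forall>j\<ge>1. finite (A j) \<and> (\<forall>p\<in>A j. snd p \<ge> 1)"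
    using assms(4,5,6) by (meson finite_subset subsetD)
  define E where "E = (\<lambda>j. q ^ nat (f j))"
  define c where "c = dprod_inf A q E"
  have n0: "n0 \<ge> 1" using assms(5,8) by force
  have m0le: "real m0 \<le> \<rho>0 * real n0"
    using assms(7,8) n0 by (auto simp: pos_divide_le_eq)
  have kb: "real j * \<rho> - 1 \<le> real (k j) \<and> real (k j) \<le> real j * \<rho> + 1" if "j \<ge> 1" for j
  proof -
    have j0: "real j > 0" using that by simp
    have "\<bar>real (k j) - real j * \<rho>\<bar> = real j * \<bar>real (k j) / real j - \<rho>\<bar>"
    proof -
      have "real (k j) - real j * \<rho> = real j * (real (k j) / real j - \<rho>)"
        using j0 by (simp add: field_simps)
      then show ?thesis using j0 by (simp add: abs_mult)
    qed
    also have "\<dots> \<le> real j * (1 / real j)"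
      using assms(11) that j0 by (intro mult_left_mono) auto
    also have "\<dots> = 1" using j0 by simp
    finally show ?thesis by linarith
  qed
  have d0: "\<rho> - \<rho>0 > 0" using assms(2) by simp
  have fbig: "j \<ge> 1 \<and> real_of_int (f j) = real n0 * real (k j) - real m0 * real j \<and> f j \<ge> 0"
    if "real j \<ge> 1 / (\<rho> - \<rho>0)" for j
  proof -
    have jd: "real j * (\<rho> - \<rho>0) \<ge> 1" using that d0 by (simp add: pos_divide_le_eq)
    then have "real j > 0" using d0 by (metis mult_eq_0_iff not_one_le_zero of_nat_0_less_iff gr0I of_nat_0)
    then have j1: "j \<ge> 1" by simp
    have ff: "real_of_int (f j) = real n0 * real (k j) - real m0 * real j"
      using assms(12) that by simp
    have "real n0 * (real j * \<rho> - 1) \<le> real n0 * real (k j)"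
      using kb[OF j1] by (intro mult_left_mono) auto
    moreover have "real m0 * real j \<le> \<rho>0 * real n0 * real j"
      using m0le by (intro mult_right_mono) auto
    moreover have "real n0 * 1 \<le> real n0 * (real j * (\<rho> - \<rho>0))"
      using jd by (intro mult_left_mono) auto
    ultimately have "real_of_int (f j) \<ge> 0" unfolding ff by (simp add: algebra_simps)
    then show ?thesis using j1 ff by simp
  qed
  define S where "S = {\<sigma>::real. summable (\<lambda>n. c n * real n powr (- \<sigma>))}"
  have below: "\<sigma> \<ge> \<rho>" if "\<sigma> \<in> S" for \<sigma>
  proof (rule ccontr)
    assume "\<not> \<sigma> \<ge> \<rho>"
    then have sr: "\<rho> - \<sigma> > 0" by simp
    define g where "g = (\<lambda>n. c n * real n powr (- \<sigma>))"
    have "summable g" using that unfolding S_def g_def by simp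
    then have "g \<longlonglongrightarrow> 0" by (rule summable_LIMSEQ_zero)
    then have "eventually (\<lambda>n. g n < 1) sequentially" by (rule order_tendstoD(2)) simp
    then obtain N0 where N0: "\<And>n. n \<ge> N0 \<Longrightarrow> g n < 1" by (auto simp: eventually_sequentially)
    define m where "m = N0 + nat \<lceil>1 / (\<rho> - \<rho>0)\<rceil> + nat \<lceil>1 / (\<rho> - \<sigma>)\<rceil> + 1"
    obtain j where j: "j \<ge> m" "j \<ge> 1" "(m0, n0) \<in> A j"
      using assms(9) unfolding infinite_nat_iff_unbounded_le by blast
    have jT0: "real j \<ge> 1 / (\<rho> - \<rho>0)"
    proof -
      have "1 / (\<rho> - \<rho>0) \<le> real (nat \<lceil>1 / (\<rho> - \<rho>0)\<rceil>)" by (rule real_nat_ceiling_ge)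
      also have "\<dots> \<le> real j" using j(1) unfolding m_def by (intro of_nat_mono) linarith
      finally show ?thesis .
    qed
    have jT1: "real j \<ge> 1 / (\<rho> - \<sigma>)"
    proof -
      have "1 / (\<rho> - \<sigma>) \<le> real (nat \<lceil>1 / (\<rho> - \<sigma>)\<rceil>)" by (rule real_nat_ceiling_ge)
      also have "\<dots> \<le> real j" using j(1) unfolding m_def by (intro of_nat_mono) linarith
      finally show ?thesis .
    qed
    define Q where "Q = q ^ j"
    define N where "N = Q ^ n0"
    have "j < 2 ^ j" by (rule less_exp)
    also have "\<dots> \<le> Q" unfolding Q_def using q2 by (intro power_mono) auto
    finally have jQ: "j < Q" .
    have "Q ^ 1 \<le> Q ^ n0" using n0 jQ by (intro power_increasing) auto
    then have QN: "Q \<le> N" unfolding N_def by simp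
    have Q2: "Q \<ge> 2" unfolding Q_def by (rule qj2[OF q2 HA j(2)])
    have N1: "N > 1" using QN Q2 by simp
    have NN0: "N \<ge> N0" using jQ QN j(1) unfolding m_def by simp
    have "c N = dprod_upto A q E N N"
      unfolding c_def using dprod_inf_eq[where e = E, OF q2 HA] N1 by simp
    also have "\<dots> \<ge> dprod_upto A q E j N"
      using PP_mono_le[where e = E, OF q2 HA, of N j] N1 jQ QN by simp
    finally have c1: "c N \<ge> dprod_upto A q E j N" .
    have "dprod_upto A q E j N \<ge> dpow (one_plus_xi (A j) Q) (E j) N"
      using PP_ge_FF[where e = E, OF q2 HA, of N j] N1 j(2) unfolding Q_def by simp
    moreover have "dpow (one_plus_xi (A j) Q) (E j) N \<ge> real (E j) * one_plus_xi (A j) Q N"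
      by (rule dpow_ge_lin[OF _ _ N1]) (use HA j(2) Q2 opx_nonneg opx_1 in auto)
    moreover have "one_plus_xi (A j) Q N = xi_coeff (A j) Q N"
      unfolding one_plus_xi_def dunit_def using N1 by simp
    moreover have "xi_coeff (A j) Q N \<ge> real Q ^ m0"
      using xi_ge[of "A j" "(m0, n0)" Q] HA j Q2 unfolding N_def by simp
    ultimately have "c N \<ge> real (E j) * real Q ^ m0"
      using c1 by (smt (verit) mult_left_mono of_nat_0_le_iff)
    then have "g N \<ge> real (E j) * real Q ^ m0 * real N powr (- \<sigma>)"
      unfolding g_def by (intro mult_right_mono) auto
    also have "real (E j) * real Q ^ m0 * real N powr (- \<sigma>)
        = real q powr (real (nat (f j)) + real j * real m0 - real j * real n0 * \<sigma>)"
      unfolding E_def Q_def N_def by (rule term_eq[OF q2])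
    also have "real (nat (f j)) + real j * real m0 - real j * real n0 * \<sigma>
        = real n0 * (real (k j) - real j * \<sigma>)"
      using fbig[OF jT0] by (simp add: algebra_simps)
    finally have gN: "g N \<ge> real q powr (real n0 * (real (k j) - real j * \<sigma>))" .
    have "real j * (\<rho> - \<sigma>) \<ge> 1" using jT1 sr by (simp add: pos_divide_le_eq)
    then have "real (k j) - real j * \<sigma> \<ge> 0" using kb[OF j(2)] by (simp add: algebra_simps)
    then have "real q powr (real n0 * (real (k j) - real j * \<sigma>)) \<ge> 1"
      using q2 by (intro ge_one_powr_ge_zero) auto
    then show False using gN N0[OF NN0] by simp
  qed
  have above: "\<sigma> \<in> S" if "\<sigma> > \<rho>" for \<sigma>
  proof -
    have sr: "\<sigma> - \<rho> > 0" using that by simp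
    have q1: "real q > 1" using q2 by simp
    define x where "x = (\<lambda>j. \<Sum>p\<in>A j. real (q ^ j) ^ fst p * real ((q ^ j) ^ snd p) powr (-\<sigma>))"
    define t where "t = (\<lambda>j. real (E j) * x j)"
    have x0: "x j \<ge> 0" for j unfolding x_def by (intro sum_nonneg) auto
    have t0: "t j \<ge> 0" for j unfolding t_def using x0[of j] by simp
    define Bset where "Bset = (\<Union>p\<in>{p\<in>a. finite {j. j \<ge> 1 \<and> p \<in> A j}}. {j. j \<ge> 1 \<and> p \<in> A j})"
    have "finite Bset" unfolding Bset_def using assms(4) by auto
    then obtain B where B: "\<And>j. j \<in> Bset \<Longrightarrow> j \<le> B" unfolding finite_nat_set_iff_bounded_le by blast
    define J0 where "J0 = B + nat \<lceil>1 / (\<rho> - \<rho>0)\<rceil> + 1"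
    define r where "r = real q powr (-(\<sigma> - \<rho>))"
    have r0: "r > 0" "r < 1" unfolding r_def using q1 sr by (auto intro: powr_less_one)
    define C where "C = real (card a) * real q powr real n0"
    have tb: "t j \<le> C * r ^ j" if jJ: "j \<ge> J0" for j
    proof -
      have jT0: "real j \<ge> 1 / (\<rho> - \<rho>0)"
      proof -
        have "1 / (\<rho> - \<rho>0) \<le> real (nat \<lceil>1 / (\<rho> - \<rho>0)\<rceil>)" by (rule real_nat_ceiling_ge)
        also have "\<dots> \<le> real j" using jJ unfolding J0_def by (intro of_nat_mono) linarith
        finally show ?thesis .
      qed
      note fj = fbig[OF jT0]
      have j1: "j \<ge> 1" using fj by simp
      have tmb: "real (E j) * (real (q ^ j) ^ fst p * real ((q ^ j) ^ snd p) powr (-\<sigma>))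
                  \<le> real q powr real n0 * r ^ j" if p: "p \<in> A j" for p
      proof -
        obtain m n where pmn: "p = (m, n)" by (cases p)
        have pa: "p \<in> a" using assms(6) j1 p by auto
        have n1: "n \<ge> 1" using assms(5) pa pmn by auto
        have "infinite {j. j \<ge> 1 \<and> p \<in> A j}"
        proof
          assume "finite {j. j \<ge> 1 \<and> p \<in> A j}"
          then have "j \<in> Bset" unfolding Bset_def using pa p j1 by blast
          then show False using B[of j] jJ unfolding J0_def by simp
        qed
        then have "\<not> prec_rel \<rho> p (m0, n0)" using assms(10) pa by blast
        then have mle: "real m - real n * \<rho> \<le> real m0 - real n0 * \<rho>"
          unfolding prec_rel_def pmn by auto
        have "real (E j) * (real (q ^ j) ^ fst p * real ((q ^ j) ^ snd p) powr (-\<sigma>))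
             = real q powr (real (nat (f j)) + real j * real m - real j * real n * \<sigma>)"
          unfolding E_def pmn using term_eq[OF q2, of "nat (f j)" j m n \<sigma>] by simp
        also have "\<dots> \<le> real q powr (real n0 - real j * (\<sigma> - \<rho>))"
        proof (intro powr_mono)
          have e1: "real (nat (f j)) = real n0 * real (k j) - real m0 * real j" using fj by simp
          have h1: "real n0 * real (k j) \<le> real n0 * (real j * \<rho> + 1)"
            using kb[OF j1] by (intro mult_left_mono) auto
          have h2: "real j * (real m - real n * \<rho>) \<le> real j * (real m0 - real n0 * \<rho>)"
            using mle by (intro mult_left_mono) auto
          have h3: "real j * (1 * (\<sigma> - \<rho>)) \<le> real j * (real n * (\<sigma> - \<rho>))"
            using n1 sr by (intro mult_left_mono mult_right_mono) auto
          show "real (nat (f j)) + real j * real m - real j * real n * \<sigma> \<le> real n0 - real j * (\<sigma> - \<rho>)"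
            using h1 h2 h3 unfolding e1 by (simp add: algebra_simps)
        qed (use q1 in simp)
        also have "\<dots> = real q powr real n0 * r ^ j"
        proof -
          have "r ^ j = real q powr (real j * (-(\<sigma> - \<rho>)))"
            unfolding r_def using q1 by (intro powr_power) simp
          moreover have "real n0 - real j * (\<sigma> - \<rho>) = real n0 + real j * (-(\<sigma> - \<rho>))" by (simp add: algebra_simps)
          ultimately show ?thesis by (simp only: powr_add)
        qed
        finally show ?thesis .
      qed
      have "t j = (\<Sum>p\<in>A j. real (E j) * (real (q ^ j) ^ fst p * real ((q ^ j) ^ snd p) powr (-\<sigma>)))"
        unfolding t_def x_def by (simp add: sum_distrib_left)
      also have "\<dots> \<le> real (card (A j)) * (real q powr real n0 * r ^ j)"
        by (rule sum_bounded_above) (rule tmb)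
      also have "\<dots> \<le> real (card a) * (real q powr real n0 * r ^ j)"
        using assms(4,6) j1 r0 by (intro mult_right_mono) (auto intro: card_mono)
      finally show ?thesis unfolding C_def by (simp add: mult.assoc)
    qed
    have "summable (\<lambda>j. C * r ^ j)" using r0 by (intro summable_mult summable_geometric) simp
    then have tsum: "summable t"
      by (rule summable_comparison_test'[where N = J0]) (use tb t0 in simp)
    define g where "g = (\<lambda>n. c n * real n powr (- \<sigma>))"
    have cN: "c N = dprod_upto A q E M N" if "0 < N" "N \<le> M" for N M
      unfolding c_def using dprod_inf_eq[where e = E, OF q2 HA, of N] PP_stable[where e = E, OF q2 HA, of N M] that by simp
    have g0: "g n \<ge> 0" for n
    proof (cases "n = 0")
      case False then show ?thesis unfolding g_def using cN[of n n] PP_nonneg[where e = E, OF q2 HA] by simp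
    qed (simp add: g_def)
    have gb: "(\<Sum>n\<le>M. g n) \<le> exp (suminf t)" for M
    proof -
      have "{..M} = insert 0 {1..M}" by auto
      then have "(\<Sum>n\<le>M. g n) = (\<Sum>n\<in>{1..M}. g n)" by (simp add: g_def)
      also have "\<dots> = (\<Sum>N\<in>{1..M}. dprod_upto A q E M N * real N powr (-\<sigma>))"
        unfolding g_def by (rule sum.cong) (auto simp: cN)
      also have "\<dots> \<le> (\<Prod>j\<in>{1..M}. (1 + x j) ^ E j)"
        unfolding x_def by (rule PP_partial_bound[OF q2 HA])
      also have "\<dots> \<le> (\<Prod>j\<in>{1..M}. exp (t j))"
      proof (rule prod_mono)
        fix j assume "j \<in> {1..M}"
        have "(1 + x j) ^ E j \<le> exp (x j) ^ E j"
          using x0[of j] by (intro power_mono exp_ge_add_one_self) auto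
        also have "\<dots> = exp (t j)" unfolding t_def by (simp add: exp_of_nat_mult)
        finally show "0 \<le> (1 + x j) ^ E j \<and> (1 + x j) ^ E j \<le> exp (t j)"
          using x0[of j] by simp
      qed
      also have "\<dots> = exp (\<Sum>j\<in>{1..M}. t j)" by (simp add: exp_sum)
      also have "\<dots> \<le> exp (suminf t)"
        using sum_le_suminf[OF tsum, of "{1..M}"] t0 by simp
      finally show ?thesis .
    qed
    have "summable g" by (rule bounded_imp_summable[OF g0 gb])
    then show ?thesis unfolding S_def g_def by simp
  qed
  have "abscissa_conv c = ereal \<rho>"
    unfolding abscissa_conv_def using Inf_eq_rho[of \<rho> S] below above unfolding S_def by blast
  then show ?thesis using prec_order unfolding c_def E_def by blast
qed
end
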